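(* Let $\mathcal{S}$ and $\mathcal{A}$ be finite state and action spaces, $\gamma\in[0,1)$, $\mu$ a start-state distribution on $\mathcal{S}$, $P(s'|s,a)$ and $P_m(s'|s,a)$ two state transition probabilities, and $\pi(a|s)$, $\pi'(a|s)$ arbitrary policies. Then $$\big\|\mathbf{d}^{\pi'}-\mathbf{d}^{\pi}_m\big\|_1 \le \frac{2\gamma}{1-\gamma}\Big(\mathbb{E}_{s\sim d^\pi_m}\big[D_{TV}(\pi'(\cdot|s)\|\pi(\cdot|s))\big] + \mathbb{E}_{s\sim d^\pi_m,\,a\sim\pi}\big[D_{TV}(P(\cdot|s,a)\|P_m(\cdot|s,a))\big]\Big).$$
   Context: $d^{\pi'}(s)=(1-\gamma)\sum_{t\ge0}\gamma^t\Pr(S_t=s\mid\pi',P)$ is the discounted stationary state distribution under policy $\pi'$ and dynamics $P$ with $S_0\sim\mu$, and $d^\pi_m(s)=(1-\gamma)\sum_{t\ge0}\gamma^t\Pr(S_t=s\mid\pi,P_m)$ the corresponding distribution under policy $\pi$ and dynamics $P_m$ with the same start distribution $\mu$; $\mathbf{d}^{\pi'},\mathbf{d}^\pi_m\in\mathbb{R}^{|\mathcal{S}|}$ are their vector forms. $D_{TV}(p\|q)=\frac12\sum_x|p(x)-q(x)|$ is the total variation distance. *)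

theory Defs
  imports "HOL-Analysis.Analysis"
begin

definition is_dist :: "('x::finite \<Rightarrow> real) \<Rightarrow> bool" where
  "is_dist p \<longleftrightarrow> (\<forall>x. 0 \<le> p x) \<and> (\<Sum>x\<in>UNIV. p x) = 1"

definition D_TV :: "('x::finite \<Rightarrow> real) \<Rightarrow> ('x \<Rightarrow> real) \<Rightarrow> real" where
  "D_TV p q = (1/2) * (\<Sum>x\<in>UNIV. \<bar>p x - q x\<bar>)"

(* Pr(S_t = s | pol, P) with S_0 ~ mu; policy pol s a = pol(a|s), dynamics P s a s' = P(s'|s,a) *)
fun state_dist :: "('s::finite \<Rightarrow> real) \<Rightarrow> ('s \<Rightarrow> 'a::finite \<Rightarrow> real)
    \<Rightarrow> ('s \<Rightarrow> 'a \<Rightarrow> 's \<Rightarrow> real) \<Rightarrow> nat \<Rightarrow> 's \<Rightarrow> real" where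
  "state_dist mu pol P 0 s' = mu s'"
| "state_dist mu pol P (Suc t) s' =
     (\<Sum>s\<in>UNIV. state_dist mu pol P t s * (\<Sum>a\<in>UNIV. pol s a * P s a s'))"

definition disc_dist :: "real \<Rightarrow> ('s::finite \<Rightarrow> real) \<Rightarrow> ('s \<Rightarrow> 'a::finite \<Rightarrow> real)
    \<Rightarrow> ('s \<Rightarrow> 'a \<Rightarrow> 's \<Rightarrow> real) \<Rightarrow> 's \<Rightarrow> real" where
  "disc_dist \<gamma> mu pol P s = (1 - \<gamma>) * (\<Sum>t. \<gamma> ^ t * state_dist mu pol P t s)"

end

theory Submission
  imports Defs
begin

lemma sd_props:
  assumes "is_dist mu" "\<And>s a. is_dist (P s a)" "\<And>s. is_dist (pol s)"
  shows "(\<forall>s. 0 \<le> state_dist mu pol P t s) \<and> (\<Sum>s\<in>UNIV. state_dist mu pol P t s) = 1"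
proof (induction t)
  case 0
  then show ?case using assms(1) by (simp add: is_dist_def)
next
  case (Suc t)
  have nn: "\<And>s a s'. 0 \<le> pol s a * P s a s'"
    using assms(2,3) by (simp add: is_dist_def)
  have r1: "(\<Sum>s'\<in>UNIV. \<Sum>a\<in>UNIV. pol s a * P s a s') = 1" for s
  proof -
    have "(\<Sum>s'\<in>UNIV. \<Sum>a\<in>UNIV. pol s a * P s a s') = (\<Sum>a\<in>UNIV. pol s a * (\<Sum>s'\<in>UNIV. P s a s'))"
      by (subst sum.swap) (simp add: sum_distrib_left)
    also have "\<dots> = 1" using assms(2,3) by (simp add: is_dist_def)
    finally show ?thesis .
  qed
  have "(\<Sum>s'\<in>UNIV. \<Sum>s\<in>UNIV. state_dist mu pol P t s * (\<Sum>a\<in>UNIV. pol s a * P s a s'))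
      = (\<Sum>s\<in>UNIV. state_dist mu pol P t s * (\<Sum>s'\<in>UNIV. \<Sum>a\<in>UNIV. pol s a * P s a s'))"
    by (subst sum.swap) (simp add: sum_distrib_left)
  also have "\<dots> = 1" using r1 Suc by simp
  finally show ?case using Suc assms(2,3) by (auto simp: is_dist_def intro!: sum_nonneg mult_nonneg_nonneg)
qed

lemma sd_le1:
  assumes "is_dist mu" "\<And>s a. is_dist (P s a)" "\<And>s. is_dist (pol s)"
  shows "state_dist mu pol P t s \<le> 1"
proof -
  have "state_dist mu pol P t s \<le> (\<Sum>s\<in>UNIV. state_dist mu pol P t s)"
    using sd_props[OF assms, where t=t] by (intro member_le_sum) auto
  then show ?thesis using sd_props[OF assms, where t=t] by simp
qed

lemma sd_summable:
  assumes "is_dist mu" "\<And>s a. is_dist (P s a)" "\<And>s. is_dist (pol s)"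
    and "0 \<le> \<gamma>" "\<gamma> < 1"
  shows "summable (\<lambda>t. \<gamma> ^ t * state_dist mu pol P t s)"
proof (rule summable_comparison_test'[where g="\<lambda>t. \<gamma> ^ t"])
  show "summable (\<lambda>t. \<gamma> ^ t)" using assms by simp
  fix n :: nat
  have "0 \<le> state_dist mu pol P n s" using sd_props[OF assms(1-3), where t=n] by auto
  moreover have "state_dist mu pol P n s \<le> 1" using sd_le1[OF assms(1-3)] .
  ultimately show "norm (\<gamma> ^ n * state_dist mu pol P n s) \<le> \<gamma> ^ n"
    using assms(4) by (simp add: abs_mult mult_left_le)
qed

lemma sd_fix:
  assumes "is_dist mu" "\<And>s a. is_dist (P s a)" "\<And>s. is_dist (pol s)"
    and "0 \<le> \<gamma>" "\<gamma> < 1"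
  shows "(\<Sum>t. \<gamma> ^ t * state_dist mu pol P t s') = mu s' +
     \<gamma> * (\<Sum>s\<in>UNIV. (\<Sum>t. \<gamma> ^ t * state_dist mu pol P t s) * (\<Sum>a\<in>UNIV. pol s a * P s a s'))"
proof -
  note sm = sd_summable[OF assms]
  have "(\<Sum>t. \<gamma> ^ t * state_dist mu pol P t s') =
     (\<Sum>t. \<gamma> ^ Suc t * state_dist mu pol P (Suc t) s') + mu s'"
    using suminf_split_head[OF sm[where s=s']] by simp
  also have "(\<Sum>t. \<gamma> ^ Suc t * state_dist mu pol P (Suc t) s') =
      (\<Sum>t. \<gamma> * (\<Sum>s\<in>UNIV. (\<gamma> ^ t * state_dist mu pol P t s) * (\<Sum>a\<in>UNIV. pol s a * P s a s')))"
    by (simp add: sum_distrib_left sum_distrib_right mult_ac)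
  also have "\<dots> = \<gamma> * (\<Sum>t. (\<Sum>s\<in>UNIV. (\<gamma> ^ t * state_dist mu pol P t s) * (\<Sum>a\<in>UNIV. pol s a * P s a s')))"
    by (rule suminf_mult) (auto intro!: summable_sum summable_mult2 sm)
  also have "(\<Sum>t. (\<Sum>s\<in>UNIV. (\<gamma> ^ t * state_dist mu pol P t s) * (\<Sum>a\<in>UNIV. pol s a * P s a s')))
     = (\<Sum>s\<in>UNIV. (\<Sum>t. (\<gamma> ^ t * state_dist mu pol P t s) * (\<Sum>a\<in>UNIV. pol s a * P s a s')))"
    by (rule suminf_sum) (auto intro!: summable_mult2 sm)
  also have "\<dots> = (\<Sum>s\<in>UNIV. (\<Sum>t. \<gamma> ^ t * state_dist mu pol P t s) * (\<Sum>a\<in>UNIV. pol s a * P s a s'))"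
    by (intro sum.cong refl suminf_mult2[symmetric] sm)
  finally show ?thesis by simp
qed

lemma D_nonneg:
  assumes "is_dist mu" "\<And>s a. is_dist (P s a)" "\<And>s. is_dist (pol s)"
    and "0 \<le> \<gamma>" "\<gamma> < 1"
  shows "0 \<le> (\<Sum>t. \<gamma> ^ t * state_dist mu pol P t s)"
  using sd_summable[OF assms] sd_props[OF assms(1-3)] assms(4)
  by (intro suminf_nonneg) auto

lemma kernel_diff:
  fixes P Pm :: "'s::finite \<Rightarrow> 'a::finite \<Rightarrow> 's \<Rightarrow> real"
  assumes "\<And>s a. is_dist (P s a)" "\<And>s a. is_dist (Pm s a)"
    "\<And>s. is_dist (pol s)" "\<And>s. is_dist (pol' s)"
  shows "(\<Sum>s'\<in>UNIV. \<bar>(\<Sum>a\<in>UNIV. pol' s a * P s a s') - (\<Sum>a\<in>UNIV. pol s a * Pm s a s')\<bar>)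
     \<le> 2 * D_TV (pol' s) (pol s) + 2 * (\<Sum>a\<in>UNIV. pol s a * D_TV (P s a) (Pm s a))"
proof -
  have "(\<Sum>s'\<in>UNIV. \<bar>(\<Sum>a\<in>UNIV. pol' s a * P s a s') - (\<Sum>a\<in>UNIV. pol s a * Pm s a s')\<bar>)
     = (\<Sum>s'\<in>UNIV. \<bar>(\<Sum>a\<in>UNIV. (pol' s a - pol s a) * P s a s') + (\<Sum>a\<in>UNIV. pol s a * (P s a s' - Pm s a s'))\<bar>)"
    by (intro sum.cong refl arg_cong[where f=abs]) (simp only: sum_subtractf[symmetric] sum.distrib[symmetric], rule sum.cong, simp_all add: algebra_simps)
  also have "\<dots> \<le> (\<Sum>s'\<in>UNIV. (\<Sum>a\<in>UNIV. \<bar>pol' s a - pol s a\<bar> * P s a s') + (\<Sum>a\<in>UNIV. pol s a * \<bar>P s a s' - Pm s a s'\<bar>))"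
  proof (intro sum_mono)
    fix s'
    have "\<bar>(\<Sum>a\<in>UNIV. (pol' s a - pol s a) * P s a s')\<bar> \<le> (\<Sum>a\<in>UNIV. \<bar>(pol' s a - pol s a) * P s a s'\<bar>)"
      by (rule sum_abs)
    also have "\<dots> = (\<Sum>a\<in>UNIV. \<bar>pol' s a - pol s a\<bar> * P s a s')"
      using assms(1) by (simp add: abs_mult is_dist_def)
    finally have 1: "\<bar>(\<Sum>a\<in>UNIV. (pol' s a - pol s a) * P s a s')\<bar> \<le> (\<Sum>a\<in>UNIV. \<bar>pol' s a - pol s a\<bar> * P s a s')" .
    have "\<bar>(\<Sum>a\<in>UNIV. pol s a * (P s a s' - Pm s a s'))\<bar> \<le> (\<Sum>a\<in>UNIV. \<bar>pol s a * (P s a s' - Pm s a s')\<bar>)"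
      by (rule sum_abs)
    also have "\<dots> = (\<Sum>a\<in>UNIV. pol s a * \<bar>P s a s' - Pm s a s'\<bar>)"
      using assms(3) by (simp add: abs_mult is_dist_def)
    finally have 2: "\<bar>(\<Sum>a\<in>UNIV. pol s a * (P s a s' - Pm s a s'))\<bar> \<le> (\<Sum>a\<in>UNIV. pol s a * \<bar>P s a s' - Pm s a s'\<bar>)" .
    show "\<bar>(\<Sum>a\<in>UNIV. (pol' s a - pol s a) * P s a s') + (\<Sum>a\<in>UNIV. pol s a * (P s a s' - Pm s a s'))\<bar>
       \<le> (\<Sum>a\<in>UNIV. \<bar>pol' s a - pol s a\<bar> * P s a s') + (\<Sum>a\<in>UNIV. pol s a * \<bar>P s a s' - Pm s a s'\<bar>)"
      using 1 2 abs_triangle_ineq[of "\<Sum>a\<in>UNIV. (pol' s a - pol s a) * P s a s'" "\<Sum>a\<in>UNIV. pol s a * (P s a s' - Pm s a s')"] by linarith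
  qed
  also have "\<dots> = (\<Sum>a\<in>UNIV. \<bar>pol' s a - pol s a\<bar> * (\<Sum>s'\<in>UNIV. P s a s')) + (\<Sum>a\<in>UNIV. pol s a * (\<Sum>s'\<in>UNIV. \<bar>P s a s' - Pm s a s'\<bar>))"
    by (simp add: sum.distrib sum_distrib_left sum_distrib_right) (rule arg_cong2[where f="(+)"]; rule sum.swap)
  also have "\<dots> = 2 * D_TV (pol' s) (pol s) + 2 * (\<Sum>a\<in>UNIV. pol s a * D_TV (P s a) (Pm s a))"
    using assms(1) by (simp add: is_dist_def D_TV_def sum_distrib_left)
  finally show ?thesis .
qed

theorem lemma1:
  fixes \<gamma> :: real
    and mu :: "'s::finite \<Rightarrow> real"
    and P Pm :: "'s \<Rightarrow> 'a::finite \<Rightarrow> 's \<Rightarrow> real"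
    and pol pol' :: "'s \<Rightarrow> 'a \<Rightarrow> real"
  assumes "0 \<le> \<gamma>" and "\<gamma> < 1"
    and "is_dist mu"
    and "\<And>s a. is_dist (P s a)"
    and "\<And>s a. is_dist (Pm s a)"
    and "\<And>s. is_dist (pol s)"
    and "\<And>s. is_dist (pol' s)"
  shows "(\<Sum>s\<in>UNIV. \<bar>disc_dist \<gamma> mu pol' P s - disc_dist \<gamma> mu pol Pm s\<bar>)
    \<le> 2 * \<gamma> / (1 - \<gamma>) *
      ((\<Sum>s\<in>UNIV. disc_dist \<gamma> mu pol Pm s * D_TV (pol' s) (pol s))
     + (\<Sum>s\<in>UNIV. disc_dist \<gamma> mu pol Pm s *
          (\<Sum>a\<in>UNIV. pol s a * D_TV (P s a) (Pm s a))))"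
proof -
  define D' where "D' s = (\<Sum>t. \<gamma> ^ t * state_dist mu pol' P t s)" for s
  define D where "D s = (\<Sum>t. \<gamma> ^ t * state_dist mu pol Pm t s)" for s
  define K' where "K' s s' = (\<Sum>a\<in>UNIV. pol' s a * P s a s')" for s s'
  define Km where "Km s s' = (\<Sum>a\<in>UNIV. pol s a * Pm s a s')" for s s'
  define B where "B s = D_TV (pol' s) (pol s) + (\<Sum>a\<in>UNIV. pol s a * D_TV (P s a) (Pm s a))" for s
  have fD': "D' s' = mu s' + \<gamma> * (\<Sum>s\<in>UNIV. D' s * K' s s')" for s'
    unfolding D'_def K'_def using sd_fix[where mu=mu and P=P and pol=pol' and \<gamma>=\<gamma>, OF assms(3,4,7,1,2)] by blast
  have fD: "D s' = mu s' + \<gamma> * (\<Sum>s\<in>UNIV. D s * Km s s')" for s'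
    unfolding D_def Km_def using sd_fix[where mu=mu and P=Pm and pol=pol and \<gamma>=\<gamma>, OF assms(3,5,6,1,2)] by blast
  have Dnn: "0 \<le> D s" for s unfolding D_def using D_nonneg[where mu=mu and P=Pm and pol=pol and \<gamma>=\<gamma>, OF assms(3,5,6,1,2)] .
  have K'nn: "0 \<le> K' s s'" for s s'
    unfolding K'_def using assms(4,7) by (auto simp: is_dist_def intro!: sum_nonneg)
  have K'1: "(\<Sum>s'\<in>UNIV. K' s s') = 1" for s
  proof -
    have "(\<Sum>s'\<in>UNIV. K' s s') = (\<Sum>a\<in>UNIV. pol' s a * (\<Sum>s'\<in>UNIV. P s a s'))"
      unfolding K'_def by (subst sum.swap) (simp add: sum_distrib_left)
    also have "\<dots> = 1" using assms(4,7) by (simp add: is_dist_def)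
    finally show ?thesis .
  qed
  have kd: "(\<Sum>s'\<in>UNIV. \<bar>K' s s' - Km s s'\<bar>) \<le> 2 * B s" for s
    unfolding K'_def Km_def B_def using kernel_diff[where P=P and Pm=Pm and pol=pol and pol'=pol' and s=s, OF assms(4,5,6,7)] by simp
  define E where "E = (\<Sum>s\<in>UNIV. \<bar>D' s - D s\<bar>)"
  have e: "D' s' - D s' = \<gamma> * ((\<Sum>s\<in>UNIV. (D' s - D s) * K' s s') + (\<Sum>s\<in>UNIV. D s * (K' s s' - Km s s')))" for s'
    by (subst fD', subst fD) (simp add: algebra_simps sum.distrib sum_subtractf)
  have "E \<le> (\<Sum>s'\<in>UNIV. \<gamma> * ((\<Sum>s\<in>UNIV. \<bar>D' s - D s\<bar> * K' s s') + (\<Sum>s\<in>UNIV. D s * \<bar>K' s s' - Km s s'\<bar>)))"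
    unfolding E_def
  proof (intro sum_mono)
    fix s'
    have a: "\<bar>\<Sum>s\<in>UNIV. (D' s - D s) * K' s s'\<bar> \<le> (\<Sum>s\<in>UNIV. \<bar>D' s - D s\<bar> * K' s s')"
      using sum_abs[of "\<lambda>s. (D' s - D s) * K' s s'" UNIV] K'nn by (simp add: abs_mult)
    have b: "\<bar>\<Sum>s\<in>UNIV. D s * (K' s s' - Km s s')\<bar> \<le> (\<Sum>s\<in>UNIV. D s * \<bar>K' s s' - Km s s'\<bar>)"
      using sum_abs[of "\<lambda>s. D s * (K' s s' - Km s s')" UNIV] Dnn by (simp add: abs_mult)
    have "\<bar>D' s' - D s'\<bar> = \<gamma> * \<bar>(\<Sum>s\<in>UNIV. (D' s - D s) * K' s s') + (\<Sum>s\<in>UNIV. D s * (K' s s' - Km s s'))\<bar>"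
      using assms(1) by (subst e) (simp add: abs_mult)
    also have "\<dots> \<le> \<gamma> * ((\<Sum>s\<in>UNIV. \<bar>D' s - D s\<bar> * K' s s') + (\<Sum>s\<in>UNIV. D s * \<bar>K' s s' - Km s s'\<bar>))"
      using a b assms(1) abs_triangle_ineq[of "\<Sum>s\<in>UNIV. (D' s - D s) * K' s s'" "\<Sum>s\<in>UNIV. D s * (K' s s' - Km s s')"]
      by (intro mult_left_mono) linarith+
    finally show "\<bar>D' s' - D s'\<bar> \<le> \<gamma> * ((\<Sum>s\<in>UNIV. \<bar>D' s - D s\<bar> * K' s s') + (\<Sum>s\<in>UNIV. D s * \<bar>K' s s' - Km s s'\<bar>))" .
  qed
  also have "\<dots> = \<gamma> * ((\<Sum>s\<in>UNIV. \<bar>D' s - D s\<bar> * (\<Sum>s'\<in>UNIV. K' s s')) + (\<Sum>s\<in>UNIV. D s * (\<Sum>s'\<in>UNIV. \<bar>K' s s' - Km s s'\<bar>)))"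
  proof -
    have s1: "(\<Sum>s'\<in>UNIV. \<Sum>s\<in>UNIV. \<bar>D' s - D s\<bar> * K' s s') = (\<Sum>s\<in>UNIV. \<bar>D' s - D s\<bar> * (\<Sum>s'\<in>UNIV. K' s s'))"
      by (subst sum.swap) (simp only: sum_distrib_left)
    have s2: "(\<Sum>s'\<in>UNIV. \<Sum>s\<in>UNIV. D s * \<bar>K' s s' - Km s s'\<bar>) = (\<Sum>s\<in>UNIV. D s * (\<Sum>s'\<in>UNIV. \<bar>K' s s' - Km s s'\<bar>))"
      by (subst sum.swap) (simp only: sum_distrib_left)
    show ?thesis by (simp only: sum_distrib_left[symmetric] sum.distrib s1 s2)
  qed
  also have "\<dots> \<le> \<gamma> * (E + (\<Sum>s\<in>UNIV. D s * (2 * B s)))"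
    using assms(1) Dnn kd by (auto simp: K'1 E_def intro!: mult_left_mono sum_mono)
  finally have "E \<le> \<gamma> * (E + (\<Sum>s\<in>UNIV. D s * (2 * B s)))" .
  hence Eb: "(1 - \<gamma>) * E \<le> 2 * \<gamma> * (\<Sum>s\<in>UNIV. D s * B s)"
    by (simp add: algebra_simps sum_distrib_left)
  have lhs: "(\<Sum>s\<in>UNIV. \<bar>disc_dist \<gamma> mu pol' P s - disc_dist \<gamma> mu pol Pm s\<bar>) = (1 - \<gamma>) * E"
    using assms(2) by (simp add: disc_dist_def D'_def[symmetric] D_def[symmetric] E_def
        right_diff_distrib[symmetric] abs_mult sum_distrib_left)
  have rhs: "(\<Sum>s\<in>UNIV. disc_dist \<gamma> mu pol Pm s * D_TV (pol' s) (pol s))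
     + (\<Sum>s\<in>UNIV. disc_dist \<gamma> mu pol Pm s * (\<Sum>a\<in>UNIV. pol s a * D_TV (P s a) (Pm s a)))
     = (1 - \<gamma>) * (\<Sum>s\<in>UNIV. D s * B s)"
    by (simp add: disc_dist_def D_def[symmetric] B_def sum_distrib_left sum.distrib algebra_simps)
  have "2 * \<gamma> / (1 - \<gamma>) * ((1 - \<gamma>) * (\<Sum>s\<in>UNIV. D s * B s)) = 2 * \<gamma> * (\<Sum>s\<in>UNIV. D s * B s)"
    using assms(2) by (simp add: divide_simps)
  then show ?thesis unfolding lhs rhs using Eb by linarith
qed

end
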